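(* Let $\xi:\mathbb{R}\to\mathbb{R}^3$ be a smooth, $L$-periodic, arclength-parametrized curve with curvature $k>0$ and torsion $\tau$. Let $\alpha:\mathbb{R}\to\mathbb{R}$ satisfy $\alpha'=\tau$, and let $J=\{t:\cos\alpha(t)\neq0\}$. Let $\eta(t)=\xi(t)+r(t)\mathbf{n}(t)-r(t)\tan\alpha(t)\,\mathbf{b}(t)$ for $t\in J$ be the corresponding Monge evolute. Then: (i) $J+L=J$ and $\eta(t+L)=\eta(t)$ for all $t\in J$ if and only if $\int_0^L\tau\,dt\in\pi\mathbb{Z}$. (ii) In particular, this holds if $\xi$ is centrally symmetric. Here this means that there exist $c\in\mathbb{R}^3$ and $t_1\in\mathbb{R}$ such that either $\xi(t+t_1)=2c-\xi(t)$ for all $t$, or $\xi(t_1-t)=2c-\xi(t)$ for all $t$; in these cases $\int_0^L\tau\,dt=0$.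
   Context: $r=1/k$, and $(\mathbf{t},\mathbf{n},\mathbf{b})$ is the Frenet frame of $\xi$. A Monge evolute of $\xi$ is a curve $\eta=\xi+y\mathbf{n}+z\mathbf{b}$ with $\eta'$ parallel to $\eta-\xi$. These are exactly the curves $\xi+r\mathbf{n}-r\tan\alpha\,\mathbf{b}$ with $\alpha'=\tau$. *)

theory Defs
  imports "HOL-Analysis.Analysis"
begin

definition vderiv :: "(real \<Rightarrow> real^3) \<Rightarrow> real \<Rightarrow> real^3" where
  "vderiv f = (\<lambda>t. vector_derivative f (at t))"

definition smooth_curve :: "(real \<Rightarrow> real^3) \<Rightarrow> bool" where
  "smooth_curve \<xi> \<longleftrightarrow> (\<forall>m t. ((vderiv ^^ m) \<xi>) differentiable (at t))"

definition tangent :: "(real \<Rightarrow> real^3) \<Rightarrow> real \<Rightarrow> real^3" where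
  "tangent \<xi> = vderiv \<xi>"

definition curvature :: "(real \<Rightarrow> real^3) \<Rightarrow> real \<Rightarrow> real" where
  "curvature \<xi> t = norm (vderiv (vderiv \<xi>) t)"

definition radius :: "(real \<Rightarrow> real^3) \<Rightarrow> real \<Rightarrow> real" where
  "radius \<xi> t = 1 / curvature \<xi> t"

definition normal :: "(real \<Rightarrow> real^3) \<Rightarrow> real \<Rightarrow> real^3" where
  "normal \<xi> t = (1 / curvature \<xi> t) *\<^sub>R vderiv (vderiv \<xi>) t"

definition binormal :: "(real \<Rightarrow> real^3) \<Rightarrow> real \<Rightarrow> real^3" where
  "binormal \<xi> t = cross3 (tangent \<xi> t) (normal \<xi> t)"

(* Frenet: n' = -k t + tau b, so tau = <n', b> *)
definition torsion :: "(real \<Rightarrow> real^3) \<Rightarrow> real \<Rightarrow> real" where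
  "torsion \<xi> t = inner (vderiv (normal \<xi>) t) (binormal \<xi> t)"

definition monge_evolute :: "(real \<Rightarrow> real^3) \<Rightarrow> (real \<Rightarrow> real) \<Rightarrow> real \<Rightarrow> real^3" where
  "monge_evolute \<xi> \<alpha> t = \<xi> t + radius \<xi> t *\<^sub>R normal \<xi> t
      - (radius \<xi> t * tan (\<alpha> t)) *\<^sub>R binormal \<xi> t"

definition evolute_domain :: "(real \<Rightarrow> real) \<Rightarrow> real set" where
  "evolute_domain \<alpha> = {t. cos (\<alpha> t) \<noteq> 0}"

definition centrally_symmetric :: "(real \<Rightarrow> real^3) \<Rightarrow> bool" where
  "centrally_symmetric \<xi> \<longleftrightarrow> (\<exists>c t1.
      (\<forall>t. \<xi> (t + t1) = 2 *\<^sub>R c - \<xi> t) \<or> (\<forall>t. \<xi> (t1 - t) = 2 *\<^sub>R c - \<xi> t))"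

end

theory Submission
  imports Defs
begin

lemma vderiv_affine:
  fixes f g :: "real \<Rightarrow> real^3"
  assumes "f differentiable (at (e*x+d))" and "g = (\<lambda>u. a + \<sigma> *\<^sub>R f (e*u+d))"
  shows "vderiv g x = (\<sigma>*e) *\<^sub>R vderiv f (e*x+d)" and "g differentiable (at x)"
proof -
  have f: "(f has_vector_derivative vderiv f (e*x+d)) (at (e*x+d))"
    using assms(1) vector_derivative_works unfolding vderiv_def by blast
  have l: "((\<lambda>u. e*u+d) has_vector_derivative e) (at x)"
    unfolding has_real_derivative_iff_has_vector_derivative[symmetric]
    by (auto intro!: derivative_eq_intros)
  have c: "((f \<circ> (\<lambda>u. e*u+d)) has_vector_derivative (e *\<^sub>R vderiv f (e*x+d))) (at x)"
    by (rule vector_diff_chain_at[OF l]) (simp add: f)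
  have "(g has_vector_derivative ((\<sigma>*e) *\<^sub>R vderiv f (e*x+d))) (at x)"
    unfolding assms(2) using has_vector_derivative_add[OF has_vector_derivative_const bounded_linear.has_vector_derivative[OF bounded_linear_scaleR_right c, of \<sigma>]]
    by (simp add: o_def)
  then show "vderiv g x = (\<sigma>*e) *\<^sub>R vderiv f (e*x+d)" and "g differentiable (at x)"
    unfolding vderiv_def using vector_derivative_at differentiableI_vector by blast+
qed

lemma normal_diff:
  assumes "vderiv (vderiv \<xi>) differentiable (at t)" "curvature \<xi> t > 0"
  shows "normal \<xi> differentiable (at t)"
proof -
  have nz: "vderiv (vderiv \<xi>) t \<noteq> 0" using assms(2) unfolding curvature_def by auto
  have "(\<lambda>t. norm (vderiv (vderiv \<xi>) t)) differentiable (at t)"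
    using differentiable_compose[of norm "vderiv (vderiv \<xi>)" t] assms(1) nz by (auto simp: o_def)
  then have "(\<lambda>t. 1 / norm (vderiv (vderiv \<xi>) t)) differentiable (at t)"
    using nz by (auto intro!: derivative_intros)
  then show ?thesis unfolding normal_def[abs_def] curvature_def
    using assms(1) by (auto intro!: derivative_intros)
qed

lemma smooth_diffs:
  assumes "smooth_curve \<xi>"
  shows "\<xi> differentiable (at t)" "vderiv \<xi> differentiable (at t)"
        "vderiv (vderiv \<xi>) differentiable (at t)"
  using assms unfolding smooth_curve_def
proof -
  have "((vderiv ^^ 2) \<xi>) = vderiv (vderiv \<xi>)" "((vderiv ^^ 1) \<xi>) = vderiv \<xi>" "((vderiv ^^ 0) \<xi>) = \<xi>" by (simp_all add: numeral_2_eq_2)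
  then show "\<xi> differentiable (at t)" "vderiv \<xi> differentiable (at t)"
        "vderiv (vderiv \<xi>) differentiable (at t)"
    using assms unfolding smooth_curve_def by metis+
qed

lemma sq1: "c = 1 \<or> c = -1 \<Longrightarrow> c * c = (1::real)" by auto

lemma transf:
  assumes sm: "smooth_curve \<xi>" and kpos: "\<forall>t. curvature \<xi> t > 0"
   and eq: "\<forall>u. \<xi> u = a + \<sigma> *\<^sub>R \<xi> (e*u+d)" and sg: "\<sigma> = 1 \<or> \<sigma> = -1" and ee: "e=1 \<or> e=-1"
  shows "torsion \<xi> x = \<sigma> * torsion \<xi> (e*x+d) \<and> normal \<xi> x = \<sigma> *\<^sub>R normal \<xi> (e*x+d)
     \<and> binormal \<xi> x = e *\<^sub>R binormal \<xi> (e*x+d) \<and> radius \<xi> x = radius \<xi> (e*x+d)"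
proof -
  note D = smooth_diffs[OF sm]
  have s2: "\<sigma>*\<sigma> = 1" and e2: "e*e=1" using sg ee by auto
  have T: "vderiv \<xi> y = (\<sigma>*e) *\<^sub>R vderiv \<xi> (e*y+d)" for y
    by (rule vderiv_affine(1)[OF D(1)]) (rule ext, rule eq[rule_format])
  have T2: "vderiv (vderiv \<xi>) y = \<sigma> *\<^sub>R vderiv (vderiv \<xi>) (e*y+d)" for y
  proof -
    have "vderiv (vderiv \<xi>) y = ((\<sigma>*e)*e) *\<^sub>R vderiv (vderiv \<xi>) (e*y+d)"
      by (rule vderiv_affine(1)[OF D(2), where a=0]) (rule ext, metis T add_0_left)
    then show ?thesis using e2 by (simp add: mult.assoc)
  qed
  have K: "curvature \<xi> y = curvature \<xi> (e*y+d)" for y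
    unfolding curvature_def using T2[of y] sg by auto
  have N: "normal \<xi> y = \<sigma> *\<^sub>R normal \<xi> (e*y+d)" for y
    unfolding normal_def using K[of y] T2[of y] by (simp add: algebra_simps)
  have N': "vderiv (normal \<xi>) y = (\<sigma>*e) *\<^sub>R vderiv (normal \<xi>) (e*y+d)" for y
    by (rule vderiv_affine(1)[OF normal_diff[OF D(3) kpos[rule_format]], where a=0]) (rule ext, metis N add_0_left)
  have B: "binormal \<xi> y = e *\<^sub>R binormal \<xi> (e*y+d)" for y
  proof -
    have "binormal \<xi> y = ((\<sigma>*e)*\<sigma>) *\<^sub>R binormal \<xi> (e*y+d)"
      unfolding binormal_def tangent_def using T[of y] N[of y]
      by (simp add: cross_mult_left cross_mult_right)
    then show ?thesis using s2 by (simp add: mult.commute mult.left_commute)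
  qed
  have tor: "torsion \<xi> x = ((\<sigma>*e)*e) * torsion \<xi> (e*x+d)"
    unfolding torsion_def using N'[of x] B[of x] by (simp add: algebra_simps)
  show ?thesis using tor e2 N[of x] B[of x] K[of x] unfolding radius_def by (simp add: mult.assoc)
qed

lemma alpha_aff:
  assumes "\<forall>t. (\<alpha> has_real_derivative \<tau> t) (at t)"
  shows "((\<lambda>y. \<alpha> (e*y+d)) has_real_derivative (\<tau> (e*x+d) * e)) (at x)"
proof -
  have "((\<lambda>y. e*y+d) has_real_derivative e) (at x)" by (auto intro!: derivative_eq_intros)
  from DERIV_chain2[OF _ this, of \<alpha> "\<tau> (e*x+d)"] assms show ?thesis by auto
qed

lemma frenet_B:
  assumes sm: "smooth_curve \<xi>" and kpos: "curvature \<xi> t > 0" and unit: "\<forall>t. norm (vderiv \<xi> t) = 1"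
  shows "binormal \<xi> t \<noteq> 0"
proof -
  note D = smooth_diffs[OF sm]
  let ?T = "vderiv \<xi>" and ?T' = "vderiv (vderiv \<xi>) t"
  have hv: "(?T has_vector_derivative ?T') (at t)"
    using D(2) vector_derivative_works unfolding vderiv_def by blast
  have "((\<lambda>u. ?T u \<bullet> ?T u) has_vector_derivative (?T t \<bullet> ?T' + ?T' \<bullet> ?T t)) (at t)"
    using bounded_bilinear.has_vector_derivative[OF bounded_bilinear_inner hv hv] by simp
  then have d1: "((\<lambda>u. ?T u \<bullet> ?T u) has_real_derivative (?T t \<bullet> ?T' + ?T' \<bullet> ?T t)) (at t)"
    using has_real_derivative_iff_has_vector_derivative by blast
  have "(\<lambda>u. ?T u \<bullet> ?T u) = (\<lambda>u. 1)"
    using unit by (simp add: fun_eq_iff power2_norm_eq_inner[symmetric])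
  then have d2: "((\<lambda>u. ?T u \<bullet> ?T u) has_real_derivative 0) (at t)" by simp
  have "?T t \<bullet> ?T' + ?T' \<bullet> ?T t = 0" using DERIV_unique[OF d1 d2] .
  then have o: "?T t \<bullet> ?T' = 0" by (simp add: inner_commute)
  have nN: "norm (normal \<xi> t) = 1" using kpos unfolding normal_def curvature_def by simp
  have oN: "?T t \<bullet> normal \<xi> t = 0" unfolding normal_def using o by simp
  have "(norm (binormal \<xi> t))\<^sup>2 = 1"
    using norm_cross_dot[of "?T t" "normal \<xi> t"] nN oN unit unfolding binormal_def tangent_def by simp
  then show ?thesis by auto
qed

lemma cos_shift:
  fixes m :: int
  shows "cos (x + pi * of_int m) \<noteq> 0 \<longleftrightarrow> cos x \<noteq> 0"
proof -
  have s: "sin (pi * of_int m) = 0" using sin_zero_iff_int2 by (metis mult.commute)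
  then have "cos (pi * of_int m) \<noteq> 0" using sin_cos_squared_add[of "pi * of_int m"] by auto
  moreover have "cos (x + pi * of_int m) = cos x * cos (pi * of_int m)" by (simp add: cos_add s)
  ultimately show ?thesis by simp
qed

lemma sin_from_tan:
  assumes "cos a \<noteq> 0" "cos b \<noteq> 0" "tan a = tan b"
  shows "sin (a - b) = 0"
proof -
  have "sin a * cos b = sin b * cos a" using assms by (simp add: tan_def field_simps)
  then show ?thesis by (simp add: sin_diff mult.commute)
qed

theorem mainTheorem16:
  fixes \<xi> :: "real \<Rightarrow> real^3" and L :: real and \<alpha> :: "real \<Rightarrow> real"
  assumes "L > 0"
    and "smooth_curve \<xi>"
    and "\<forall>t. \<xi> (t + L) = \<xi> t"
    and "\<forall>t. norm (vderiv \<xi> t) = 1"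
    and "\<forall>t. curvature \<xi> t > 0"
    and "\<forall>t. (\<alpha> has_real_derivative torsion \<xi> t) (at t)"
  shows "(((\<lambda>t. t + L) ` evolute_domain \<alpha> = evolute_domain \<alpha> \<and>
            (\<forall>t\<in>evolute_domain \<alpha>. monge_evolute \<xi> \<alpha> (t + L) = monge_evolute \<xi> \<alpha> t))
          \<longleftrightarrow> (\<exists>m::int. integral {0..L} (torsion \<xi>) = pi * of_int m))
       \<and> (centrally_symmetric \<xi> \<longrightarrow>
            integral {0..L} (torsion \<xi>) = 0 \<and>
            (\<lambda>t. t + L) ` evolute_domain \<alpha> = evolute_domain \<alpha> \<and>
            (\<forall>t\<in>evolute_domain \<alpha>. monge_evolute \<xi> \<alpha> (t + L) = monge_evolute \<xi> \<alpha> t))"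
proof -
  note sm = assms(2) and kpos = assms(5) and ad = assms(6)
  define I where "I = \<alpha> L - \<alpha> 0"
  have per: "torsion \<xi> x = torsion \<xi> (x+L) \<and> normal \<xi> x = normal \<xi> (x+L)
     \<and> binormal \<xi> x = binormal \<xi> (x+L) \<and> radius \<xi> x = radius \<xi> (x+L)" for x
    using transf[OF sm kpos, of 0 1 1 L x] assms(3) by (simp add: add.commute)
  have ash: "\<alpha> (t+L) = \<alpha> t + I" for t
  proof -
    have "((\<lambda>y. \<alpha> (1*y+L) - \<alpha> y) has_real_derivative 0) (at x)" for x
      using DERIV_diff[OF alpha_aff[OF ad, of 1 L x] ad[rule_format, of x]] per[of x]
      by (simp add: add.commute)
    then have "\<alpha> (1*t+L) - \<alpha> t = \<alpha> (1*0+L) - \<alpha> 0" by (rule DERIV_isconst_all[rule_format])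
    then show ?thesis unfolding I_def by simp
  qed
  have intI: "integral {0..L} (torsion \<xi>) = I"
  proof -
    have "(torsion \<xi> has_integral (\<alpha> L - \<alpha> 0)) {0..L}"
      apply (rule fundamental_theorem_of_calculus)
      using assms(1) apply simp
      using ad has_real_derivative_iff_has_vector_derivative has_vector_derivative_at_within by blast
    then show ?thesis unfolding I_def by (rule integral_unique)
  qed
  let ?J = "evolute_domain \<alpha>"
  have bk: "(\<lambda>t. t + L) ` ?J = ?J \<and> (\<forall>t\<in>?J. monge_evolute \<xi> \<alpha> (t + L) = monge_evolute \<xi> \<alpha> t)"
    if m: "I = pi * of_int m" for m :: int
  proof -
    have cs: "cos (\<alpha> (t+L)) \<noteq> 0 \<longleftrightarrow> cos (\<alpha> t) \<noteq> 0" for t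
      using cos_shift[of "\<alpha> t" m] ash[of t] m by simp
    have tn: "tan (\<alpha> (t+L)) = tan (\<alpha> t)" for t
      using tan_periodic_int[of "\<alpha> t" m] ash[of t] m by (simp add: mult.commute)
    have "(\<lambda>t. t + L) ` ?J = ?J"
    proof (intro set_eqI iffI)
      fix y assume "y \<in> (\<lambda>t. t + L) ` ?J" then show "y \<in> ?J"
        using cs unfolding evolute_domain_def by auto
    next
      fix y assume y: "y \<in> ?J"
      then have "y - L \<in> ?J" using cs[of "y-L"] unfolding evolute_domain_def by simp
      then show "y \<in> (\<lambda>t. t + L) ` ?J" by (rule rev_image_eqI) simp
    qed
    moreover have "monge_evolute \<xi> \<alpha> (t + L) = monge_evolute \<xi> \<alpha> t" for t
      unfolding monge_evolute_def using per[of t] tn[of t] assms(3) by simp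
    ultimately show ?thesis by simp
  qed
  have fwd: "\<exists>m::int. I = pi * of_int m"
    if h: "(\<lambda>t. t + L) ` ?J = ?J \<and> (\<forall>t\<in>?J. monge_evolute \<xi> \<alpha> (t + L) = monge_evolute \<xi> \<alpha> t)"
  proof -
    have "sin I = 0"
    proof (cases "?J = {}")
      case True
      then have "cos (\<alpha> 0) = 0" "cos (\<alpha> L) = 0" unfolding evolute_domain_def by auto
      then show ?thesis unfolding I_def by (simp add: sin_diff)
    next
      case False
      then obtain t where t: "t \<in> ?J" by auto
      then have tL: "t + L \<in> ?J" using h by blast
      have "monge_evolute \<xi> \<alpha> (t + L) = monge_evolute \<xi> \<alpha> t" using h t by blast
      then have "(radius \<xi> t * tan (\<alpha> (t+L))) *\<^sub>R binormal \<xi> t = (radius \<xi> t * tan (\<alpha> t)) *\<^sub>R binormal \<xi> t"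
        unfolding monge_evolute_def using per[of t] assms(3) by simp
      moreover have "binormal \<xi> t \<noteq> 0" using frenet_B[OF sm kpos[rule_format] assms(4)] .
      moreover have "radius \<xi> t \<noteq> 0" unfolding radius_def using kpos by (simp add: less_imp_neq[symmetric])
      ultimately have "tan (\<alpha> (t+L)) = tan (\<alpha> t)" by simp
      then have "sin (\<alpha> (t+L) - \<alpha> t) = 0" using sin_from_tan t tL unfolding evolute_domain_def by blast
      then show ?thesis using ash[of t] by simp
    qed
    then obtain i :: int where "I = of_int i * pi" using sin_zero_iff_int2 by blast
    then show ?thesis by (metis mult.commute)
  qed
  have cs0: "I = 0" if csy: "centrally_symmetric \<xi>"
  proof -
    obtain c t1 where "(\<forall>t. \<xi> (t + t1) = 2 *\<^sub>R c - \<xi> t) \<or> (\<forall>t. \<xi> (t1 - t) = 2 *\<^sub>R c - \<xi> t)"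
      using csy unfolding centrally_symmetric_def by blast
    then show ?thesis
    proof
      assume h1: "\<forall>t. \<xi> (t + t1) = 2 *\<^sub>R c - \<xi> t"
      have "\<forall>u. \<xi> u = 2 *\<^sub>R c + (-1) *\<^sub>R \<xi> (1*u + (-t1))"
      proof
        fix u show "\<xi> u = 2 *\<^sub>R c + (-1) *\<^sub>R \<xi> (1*u + (-t1))" using h1[rule_format, of "u - t1"] by simp
      qed
      note tr = transf[OF sm kpos this]
      have "((\<lambda>y. \<alpha> (1*y+(-t1)) + \<alpha> y) has_real_derivative 0) (at x)" for x
        using DERIV_add[OF alpha_aff[OF ad, of 1 "-t1" x] ad[rule_format, of x]] tr[of x]
        by simp
      then have "\<alpha> (1*L+(-t1)) + \<alpha> L = \<alpha> (1*0+(-t1)) + \<alpha> 0" by (rule DERIV_isconst_all[rule_format])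
      then show ?thesis using ash[of "-t1"] unfolding I_def by simp
    next
      assume h1: "\<forall>t. \<xi> (t1 - t) = 2 *\<^sub>R c - \<xi> t"
      have "\<forall>u. \<xi> u = 2 *\<^sub>R c + (-1) *\<^sub>R \<xi> ((-1)*u + t1)"
      proof
        fix u show "\<xi> u = 2 *\<^sub>R c + (-1) *\<^sub>R \<xi> ((-1)*u + t1)" using h1[rule_format, of u] by simp
      qed
      note tr = transf[OF sm kpos this]
      have "((\<lambda>y. \<alpha> y - \<alpha> ((-1)*y+t1)) has_real_derivative 0) (at x)" for x
        using DERIV_diff[OF ad[rule_format, of x] alpha_aff[OF ad, of "-1" t1 x]] tr[of x]
        by simp
      then have "\<alpha> L - \<alpha> ((-1)*L+t1) = \<alpha> 0 - \<alpha> ((-1)*0+t1)" by (rule DERIV_isconst_all[rule_format])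
      then show ?thesis using ash[of "t1 - L"] unfolding I_def by simp
    qed
  qed
  show ?thesis
    using bk fwd cs0 intI by (metis mult_zero_right of_int_0)
qed

end
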